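(* Let $1\le n<L$ and all rates positive. For $i\in\{1,\dots,n\}$ write $f_i(p_1,\dots,p_n,q_1,\dots,q_n)=\langle\eta_{i,1}\rangle$, the stationary density of $\Box$'s at site $(i,1)$ as a function of the rates. Then for $1\le i\le n$, $$f_i(p_2,p_3,\dots,p_n,p_1,\;q_2,q_3,\dots,q_n,q_1)=f_{i+1}(p_1,\dots,p_n,q_1,\dots,q_n),$$ i.e. $\langle\eta_{i,1}\rangle$ with $p_j\to p_{j+1}$, $q_j\to q_{j+1}$ for all $j$ (indices mod $n$) equals $\langle\eta_{i+1,1}\rangle$, where $f_{n+1}=f_1$.
   Context: Particle labels/rows are taken modulo $n$, positions/columns modulo $L$. $\Omega_{L,n}$ is the set of words $w_1\cdots w_L$ on the ring $\mathbb{Z}/L\mathbb{Z}$ over the alphabet $\{\bullet_1,\dots,\bullet_n,\Box_1,\dots,\Box_n\}$ in which each $\bullet_k$ occurs exactly once, the $\bullet_1,\dots,\bullet_n$ appear in this cyclic order, and the remaining $L-n$ letters are arbitrary $\Box_i$'s. Transitions (displayed segments are consecutive positions, rest unchanged, $C$ a possibly empty word in the $\Box$-letters): (T1) $\bullet_k\Box_i \to \Box_i\bullet_k$ at rate $p_k$, if $i\neq k$; (T2) $\bullet_{k-1}\,C\,\bullet_k\Box_k \to \bullet_{k-1}\Box_{k-1}\,C\,\bullet_k$ at rate $p_k$; (T3) $\Box_i\bullet_k \to \bullet_k\Box_i$ at rate $q_k$, if $i\neq k$; (T4) $\Box_k\bullet_k\,C\,\bullet_{k+1} \to \bullet_k\,C\,\Box_{k+1}\bullet_{k+1}$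 at rate $q_k$. $\mathcal{A}_{L,n}$ is the set of arrays with $n$ rows and $L$ columns, entries in $\{\cdot,\bullet,\Box\}$, identified with $\Omega_{L,n}$ via: column $j$ has a $\bullet$ (resp. $\Box$) in row $k$ and $\cdot$ elsewhere iff $w_j=\bullet_k$ (resp. $\Box_k$); it carries the transported dynamics, irreducible when all rates are positive. $\eta_{i,j}$ is the indicator that site (row $i$, column $j$) is occupied by a $\Box$, and $\langle\cdot\rangle$ denotes expectation under the unique stationary distribution. *)

theory Defs
  imports Main "HOL.Real"
begin

text \<open>Particle labels / rows are 0-based here:
  label k < n stands for the paper's label k+1. A word w_1 ... w_L is a list of
  length L; list index t stands for position t+1 (so index 0 is column 1).\<close>
datatype letter = Bul nat | Box nat

fun is_box :: "letter \<Rightarrow> bool" where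
  "is_box (Box _) = True" | "is_box (Bul _) = False"

definition Omega :: "nat \<Rightarrow> nat \<Rightarrow> letter list set" where
  "Omega L n = {w. length w = L
     \<and> set w \<subseteq> {Bul k | k. k < n} \<union> {Box i | i. i < n}
     \<and> (\<forall>k<n. length (filter (\<lambda>x. x = Bul k) w) = 1)
     \<and> (\<exists>r. [k. Bul k \<leftarrow> w] = rotate r [0..<n])}"

definition prv :: "nat \<Rightarrow> nat \<Rightarrow> nat" where "prv n k = (k + n - 1) mod n"
definition nxt :: "nat \<Rightarrow> nat \<Rightarrow> nat" where "nxt n k = (k + 1) mod n"

text \<open>Displayed segments are
  consecutive positions on the ring: after rotating the word so that the segment
  starts at the beginning, the word splits as segment @ rest.\<close>
definition T1 :: "nat \<Rightarrow> nat \<Rightarrow> letter list \<Rightarrow> letter list \<Rightarrow> bool" where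
  "T1 n k w w' = (\<exists>r i D. i \<noteq> k \<and>
      rotate r w = [Bul k, Box i] @ D \<and> rotate r w' = [Box i, Bul k] @ D)"

definition T2 :: "nat \<Rightarrow> nat \<Rightarrow> letter list \<Rightarrow> letter list \<Rightarrow> bool" where
  "T2 n k w w' = (\<exists>r C D. (\<forall>c\<in>set C. is_box c) \<and>
      rotate r w = [Bul (prv n k)] @ C @ [Bul k, Box k] @ D \<and>
      rotate r w' = [Bul (prv n k), Box (prv n k)] @ C @ [Bul k] @ D)"

definition T3 :: "nat \<Rightarrow> nat \<Rightarrow> letter list \<Rightarrow> letter list \<Rightarrow> bool" where
  "T3 n k w w' = (\<exists>r i D. i \<noteq> k \<and>
      rotate r w = [Box i, Bul k] @ D \<and> rotate r w' = [Bul k, Box i] @ D)"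

definition T4 :: "nat \<Rightarrow> nat \<Rightarrow> letter list \<Rightarrow> letter list \<Rightarrow> bool" where
  "T4 n k w w' = (\<exists>r C D. (\<forall>c\<in>set C. is_box c) \<and>
      rotate r w = [Box k, Bul k] @ C @ [Bul (nxt n k)] @ D \<and>
      rotate r w' = [Bul k] @ C @ [Box (nxt n k), Bul (nxt n k)] @ D)"

definition rate :: "nat \<Rightarrow> (nat \<Rightarrow> real) \<Rightarrow> (nat \<Rightarrow> real) \<Rightarrow> letter list \<Rightarrow> letter list \<Rightarrow> real" where
  "rate n p q w w' = (\<Sum>k<n.
      (if T1 n k w w' then p k else 0) + (if T2 n k w w' then p k else 0)
    + (if T3 n k w w' then q k else 0) + (if T4 n k w w' then q k else 0))"

definition stationary :: "nat \<Rightarrow> nat \<Rightarrow> (nat \<Rightarrow> real) \<Rightarrow> (nat \<Rightarrow> real) \<Rightarrow> (letter list \<Rightarrow> real) \<Rightarrow> bool" where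
  "stationary L n p q \<pi> =
     ((\<forall>w. w \<notin> Omega L n \<longrightarrow> \<pi> w = 0)
      \<and> (\<forall>w\<in>Omega L n. 0 \<le> \<pi> w)
      \<and> (\<Sum>w\<in>Omega L n. \<pi> w) = 1
      \<and> (\<forall>w\<in>Omega L n. (\<Sum>w'\<in>Omega L n. \<pi> w' * rate n p q w' w)
                         = \<pi> w * (\<Sum>w'\<in>Omega L n. rate n p q w w')))"

definition stat_dist :: "nat \<Rightarrow> nat \<Rightarrow> (nat \<Rightarrow> real) \<Rightarrow> (nat \<Rightarrow> real) \<Rightarrow> letter list \<Rightarrow> real" where
  "stat_dist L n p q = (THE \<pi>. stationary L n p q \<pi>)"

text \<open>f_{i}(p,q) = <eta_{i,1}>: stationary probability that column 1 (list index 0)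
  holds a Box in row i (0-based label i).\<close>
definition box_density :: "nat \<Rightarrow> nat \<Rightarrow> (nat \<Rightarrow> real) \<Rightarrow> (nat \<Rightarrow> real) \<Rightarrow> nat \<Rightarrow> real" where
  "box_density L n p q i = (\<Sum>w\<in>{w\<in>Omega L n. w ! 0 = Box i}. stat_dist L n p q w)"

end

theory Submission
  imports Defs "Jordan_Normal_Form.Determinant"
begin

definition bls :: "letter list \<Rightarrow> nat list" where "bls w = [k. Bul k \<leftarrow> w]"

lemma bls_simps[simp]: "bls [] = []" "bls (Bul k # w) = k # bls w" "bls (Box i # w) = bls w"
  "bls (a @ b) = bls a @ bls b"
  by (simp_all add: bls_def)

lemma bls_map_Box[simp]: "bls (map Box xs) = []" by (induct xs) auto
lemma bls_map_Bul[simp]: "bls (map Bul xs) = xs" by (induct xs) auto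
lemma bls_replicate_Box[simp]: "bls (replicate m (Box x)) = []" by (induct m) auto

lemma filter_Bul_bls: "length (filter (\<lambda>x. x = Bul k) w) = count_list (bls w) k"
proof (induct w)
  case (Cons a w) then show ?case by (cases a) auto
qed simp

lemma Bul_in_bls: "Bul k \<in> set w \<longleftrightarrow> k \<in> set (bls w)"
proof (induct w)
  case (Cons a w) then show ?case by (cases a) auto
qed simp

lemma count_list_distinct: "distinct xs \<Longrightarrow> count_list xs x = (if x \<in> set xs then 1 else 0)"
  by (induct xs) auto

lemma concat_map_rotate: "\<exists>m. concat (map f (rotate s xs)) = rotate m (concat (map f xs))"
proof -
  let ?k = "s mod length xs"
  have "rotate s xs = drop ?k xs @ take ?k xs" by (simp add: rotate_drop_take)
  moreover have "concat (map f xs) = concat (map f (take ?k xs)) @ concat (map f (drop ?k xs))"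
    by (metis append_take_drop_id concat_append map_append)
  ultimately show ?thesis by (metis concat_append map_append rotate_append)
qed

lemma bls_rotate: "\<exists>m. bls (rotate s w) = rotate m (bls w)"
  unfolding bls_def by (rule concat_map_rotate)

lemma Omega_intro:
  assumes "length w = L" "\<And>i. Box i \<in> set w \<Longrightarrow> i < n" "bls w = rotate r [0..<n]"
  shows "w \<in> Omega L n"
proof -
  have "set w \<subseteq> {Bul k | k. k < n} \<union> {Box i | i. i < n}"
  proof
    fix x assume x: "x \<in> set w"
    show "x \<in> {Bul k | k. k < n} \<union> {Box i | i. i < n}"
    proof (cases x)
      case (Bul k)
      then have "k \<in> set (bls w)" using x Bul_in_bls by auto
      then have "k < n" using assms(3) by simp
      then show ?thesis using Bul by auto
    next
      case (Box i) then show ?thesis using assms(2) x by auto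
    qed
  qed
  moreover have "\<forall>k<n. length (filter (\<lambda>x. x = Bul k) w) = 1"
    using assms(3) by (simp add: filter_Bul_bls count_list_distinct)
  ultimately show ?thesis using assms unfolding Omega_def bls_def[symmetric] by blast
qed

lemma Omega_D:
  assumes "w \<in> Omega L n"
  shows "length w = L" "\<And>i. Box i \<in> set w \<Longrightarrow> i < n" "\<exists>r. bls w = rotate r [0..<n]"
  using assms unfolding Omega_def bls_def[symmetric] by auto

lemma Omega_rotate: "w \<in> Omega L n \<Longrightarrow> rotate s w \<in> Omega L n"
proof -
  assume w: "w \<in> Omega L n"
  obtain r where r: "bls w = rotate r [0..<n]" using Omega_D(3)[OF w] by blast
  obtain m where m: "bls (rotate s w) = rotate m (bls w)" using bls_rotate by blast
  show ?thesis
    by (rule Omega_intro[where r="m + r"]) (use w Omega_D[OF w] m r in \<open>auto simp: rotate_rotate\<close>)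
qed

definition wordl :: "nat list \<Rightarrow> nat list list \<Rightarrow> letter list" where
  "wordl ks G = concat (map (\<lambda>j. Bul j # map Box (G!j)) ks)"

lemma wordl_simps[simp]: "wordl [] G = []" "wordl (j # ks) G = Bul j # map Box (G!j) @ wordl ks G"
  "wordl (as @ bs) G = wordl as G @ wordl bs G"
  by (simp_all add: wordl_def)

lemma bls_wordl[simp]: "bls (wordl ks G) = ks" by (induct ks) auto

lemma wordl_cong: "(\<And>j. j \<in> set ks \<Longrightarrow> G!j = G'!j) \<Longrightarrow> wordl ks G = wordl ks G'"
  by (induct ks) auto

lemma Box_in_wordl: "Box i \<in> set (wordl ks G) \<Longrightarrow> \<exists>j\<in>set ks. i \<in> set (G!j)"
  by (induct ks) auto

lemma wordl_rotate: "\<exists>m. wordl (rotate k ks) G = rotate m (wordl ks G)"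
  unfolding wordl_def by (rule concat_map_rotate)

definition valid :: "nat \<Rightarrow> nat \<Rightarrow> nat list list \<Rightarrow> bool" where
  "valid L n G = (length G = n \<and> (\<forall>j<n. \<forall>x\<in>set (G!j). x < n) \<and> length (wordl [0..<n] G) = L)"

lemma valid_Omega: "valid L n G \<Longrightarrow> wordl [0..<n] G \<in> Omega L n"
  unfolding valid_def
  by (rule Omega_intro[where r=0]) (auto dest!: Box_in_wordl)

lemma decomp_aux: "distinct (bls v) \<Longrightarrow>
   \<exists>B g. v = map Box B @ concat (map (\<lambda>j. Bul j # map Box (g j)) (bls v))"
proof (induct v)
  case Nil then show ?case by simp
next
  case (Cons a v)
  show ?case
  proof (cases a)
    case (Bul k)
    with Cons.prems have d: "distinct (bls v)" and kn: "k \<notin> set (bls v)" by auto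
    obtain B g where v: "v = map Box B @ concat (map (\<lambda>j. Bul j # map Box (g j)) (bls v))"
      using Cons.hyps[OF d] by blast
    let ?g = "g(k := B)"
    have "concat (map (\<lambda>j. Bul j # map Box (?g j)) (bls v)) = concat (map (\<lambda>j. Bul j # map Box (g j)) (bls v))"
      using kn by (intro arg_cong[where f=concat] map_cong) auto
    then have "a # v = map Box [] @ concat (map (\<lambda>j. Bul j # map Box (?g j)) (bls (a # v)))"
      using v Bul by simp
    then show ?thesis by blast
  next
    case (Box i)
    with Cons.prems have d: "distinct (bls v)" by auto
    obtain B g where v: "v = map Box B @ concat (map (\<lambda>j. Bul j # map Box (g j)) (bls v))"
      using Cons.hyps[OF d] by blast
    then have "a # v = map Box (i # B) @ concat (map (\<lambda>j. Bul j # map Box (g j)) (bls (a # v)))"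
      using Box by simp
    then show ?thesis by blast
  qed
qed

lemma rotate_range_hd0: "0 < n \<Longrightarrow> hd (rotate t [0..<n]) = 0 \<Longrightarrow> rotate t [0..<n] = [0..<n]"
proof -
  assume n: "0 < n" and h: "hd (rotate t [0..<n]) = 0"
  have "rotate t [0..<n] ! 0 = [0..<n] ! ((0 + t) mod n)" using n by (simp add: nth_rotate)
  also have "\<dots> = t mod n" using n by simp
  finally have "t mod n = 0" using h n by (simp add: hd_conv_nth)
  then show ?thesis by (simp add: rotate_id)
qed

lemma Omega_decomp:
  assumes w: "w \<in> Omega L n" and n: "0 < n"
  shows "\<exists>s G. valid L n G \<and> w = rotate s (wordl [0..<n] G)"
proof -
  obtain r where r: "bls w = rotate r [0..<n]" using Omega_D(3)[OF w] by blast
  have L: "length w = L" using Omega_D(1)[OF w] .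
  have "0 \<in> set (bls w)" using r n by simp
  then have "Bul 0 \<in> set w" using Bul_in_bls by blast
  then obtain a where a: "a < L" "w ! a = Bul 0" using L by (metis in_set_conv_nth)
  let ?v = "rotate a w"
  have v0: "?v ! 0 = Bul 0" using a L by (simp add: nth_rotate)
  have vne: "?v \<noteq> []" using a L by auto
  then obtain v' where vv: "?v = Bul 0 # v'" using v0 by (cases ?v) auto
  obtain m where m: "bls ?v = rotate m (bls w)" using bls_rotate by blast
  have "bls ?v = rotate (m + r) [0..<n]" using m r by (simp add: rotate_rotate)
  moreover have "hd (bls ?v) = 0" using vv by simp
  ultimately have bv: "bls ?v = [0..<n]" using rotate_range_hd0[OF n] by metis
  obtain B g where Bg: "?v = map Box B @ concat (map (\<lambda>j. Bul j # map Box (g j)) (bls ?v))"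
    using decomp_aux[of ?v] bv by auto
  have B: "B = []"
  proof (rule ccontr)
    assume "B \<noteq> []"
    then obtain b B' where "B = b # B'" by (cases B) auto
    then show False using Bg vv by simp
  qed
  let ?G = "map g [0..<n]"
  have wG: "wordl [0..<n] ?G = concat (map (\<lambda>j. Bul j # map Box (g j)) [0..<n])"
    unfolding wordl_def by (intro arg_cong[where f=concat] map_cong) auto
  have vG: "?v = wordl [0..<n] ?G" using Bg B bv wG by simp
  have rw: "w = rotate (L - a) ?v"
    using a L by (simp add: rotate_rotate rotate_id)
  have "valid L n ?G"
    unfolding valid_def
  proof (intro conjI allI impI ballI)
    show "length ?G = n" by simp
    show "length (wordl [0..<n] ?G) = L" using vG L by (metis length_rotate)
  next
    fix j x assume j: "j < n" and x: "x \<in> set (?G ! j)"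
    have "Box x \<in> set (wordl [0..<n] ?G)" using j x unfolding wordl_def by force
    then have "Box x \<in> set w" using vG by (metis set_rotate)
    then show "x < n" using Omega_D(2)[OF w] by blast
  qed
  then show ?thesis using rw vG by metis
qed

lemma rot_fix:
  assumes "length w = N" "length w' = N" "0 < N"
  shows "\<exists>r'. rotate r' (rotate s w) = rotate r w \<and> rotate r' (rotate s w') = rotate r w'"
proof -
  define r' where "r' = r + (N - s mod N)"
  have sm: "s mod N < N" using assms(3) by simp
  have d: "N * (s div N) + s mod N = s" by (rule mult_div_mod_eq)
  have e: "r' + s = r + N + N * (s div N)"
    unfolding r'_def using d sm by linarith
  have "(r' + s) mod N = r mod N" unfolding e by simp
  have rot: "rotate r' (rotate s x) = rotate r x" if "length x = N" for x
  proof -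
    have a1: "rotate (r'+s) x = rotate ((r'+s) mod length x) x" by (rule rotate_conv_mod)
    have a2: "rotate r x = rotate (r mod length x) x" by (rule rotate_conv_mod)
    have "rotate r' (rotate s x) = rotate (r' + s) x" by (simp add: rotate_rotate)
    also have "\<dots> = rotate ((r'+s) mod length x) x" by (rule a1)
    also have "\<dots> = rotate (r mod length x) x" using that \<open>(r' + s) mod N = r mod N\<close> by (simp only:)
    also have "\<dots> = rotate r x" by (rule a2[symmetric])
    finally show ?thesis .
  qed
  show ?thesis using rot[OF assms(1)] rot[OF assms(2)] by blast
qed

lemma T1_rot: "T1 n k w w' \<Longrightarrow> T1 n k (rotate s w) (rotate s w')"
proof -
  assume "T1 n k w w'"
  then obtain r i D where h: "i \<noteq> k" "rotate r w = [Bul k, Box i] @ D" "rotate r w' = [Box i, Bul k] @ D"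
    unfolding T1_def by blast
  have "length (rotate r w) = length (rotate r w')" "0 < length (rotate r w)" using h by simp_all
  then have l: "length w = length w'" "0 < length w" by simp_all
  obtain r' where "rotate r' (rotate s w) = rotate r w" "rotate r' (rotate s w') = rotate r w'"
    using rot_fix[OF refl l(1)[symmetric] l(2)] by blast
  then show ?thesis unfolding T1_def using h by metis
qed

lemma T3_rot: "T3 n k w w' \<Longrightarrow> T3 n k (rotate s w) (rotate s w')"
proof -
  assume "T3 n k w w'"
  then obtain r i D where h: "i \<noteq> k" "rotate r w = [Box i, Bul k] @ D" "rotate r w' = [Bul k, Box i] @ D"
    unfolding T3_def by blast
  have "length (rotate r w) = length (rotate r w')" "0 < length (rotate r w)" using h by simp_all
  then have l: "length w = length w'" "0 < length w" by simp_all
  obtain r' where "rotate r' (rotate s w) = rotate r w" "rotate r' (rotate s w') = rotate r w'"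
    using rot_fix[OF refl l(1)[symmetric] l(2)] by blast
  then show ?thesis unfolding T3_def using h by metis
qed

lemma T2_rot: "T2 n k w w' \<Longrightarrow> T2 n k (rotate s w) (rotate s w')"
proof -
  assume "T2 n k w w'"
  then obtain r C D where h: "\<forall>c\<in>set C. is_box c" "rotate r w = [Bul (prv n k)] @ C @ [Bul k, Box k] @ D"
     "rotate r w' = [Bul (prv n k), Box (prv n k)] @ C @ [Bul k] @ D"
    unfolding T2_def by blast
  have "length (rotate r w) = length (rotate r w')" "0 < length (rotate r w)" using h by simp_all
  then have l: "length w = length w'" "0 < length w" by simp_all
  obtain r' where "rotate r' (rotate s w) = rotate r w" "rotate r' (rotate s w') = rotate r w'"
    using rot_fix[OF refl l(1)[symmetric] l(2)] by blast
  then show ?thesis unfolding T2_def using h by metis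
qed

lemma T4_rot: "T4 n k w w' \<Longrightarrow> T4 n k (rotate s w) (rotate s w')"
proof -
  assume "T4 n k w w'"
  then obtain r C D where h: "\<forall>c\<in>set C. is_box c" "rotate r w = [Box k, Bul k] @ C @ [Bul (nxt n k)] @ D"
     "rotate r w' = [Bul k] @ C @ [Box (nxt n k), Bul (nxt n k)] @ D"
    unfolding T4_def by blast
  have "length (rotate r w) = length (rotate r w')" "0 < length (rotate r w)" using h by simp_all
  then have l: "length w = length w'" "0 < length w" by simp_all
  obtain r' where "rotate r' (rotate s w) = rotate r w" "rotate r' (rotate s w') = rotate r w'"
    using rot_fix[OF refl l(1)[symmetric] l(2)] by blast
  then show ?thesis unfolding T4_def using h by metis
qed

definition mv :: "nat \<Rightarrow> letter list \<Rightarrow> letter list \<Rightarrow> bool" where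
  "mv n w w' = (\<exists>k<n. T1 n k w w' \<or> T2 n k w w' \<or> T3 n k w w' \<or> T4 n k w w')"

definition st :: "nat \<Rightarrow> nat \<Rightarrow> letter list \<Rightarrow> letter list \<Rightarrow> bool" where
  "st L n w w' = (w \<in> Omega L n \<and> w' \<in> Omega L n \<and> mv n w w')"

lemma st_rot: "st L n w w' \<Longrightarrow> st L n (rotate s w) (rotate s w')"
proof -
  assume a: "st L n w w'"
  then obtain k where k: "k < n" "T1 n k w w' \<or> T2 n k w w' \<or> T3 n k w w' \<or> T4 n k w w'"
    unfolding st_def mv_def by blast
  have "T1 n k (rotate s w) (rotate s w') \<or> T2 n k (rotate s w) (rotate s w') \<or> T3 n k (rotate s w) (rotate s w') \<or> T4 n k (rotate s w) (rotate s w')"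
    using k(2) T1_rot T2_rot T3_rot T4_rot by blast
  then show ?thesis using a k(1) Omega_rotate unfolding st_def mv_def by blast
qed

lemma sts_rot: "(st L n)\<^sup>*\<^sup>* w w' \<Longrightarrow> (st L n)\<^sup>*\<^sup>* (rotate s w) (rotate s w')"
proof (induct rule: rtranclp_induct)
  case base then show ?case by simp
next
  case (step y z) then show ?case using st_rot by (metis rtranclp.rtrancl_into_rtrancl)
qed

definition rr :: "nat \<Rightarrow> nat \<Rightarrow> letter list \<Rightarrow> letter list \<Rightarrow> bool" where
  "rr L n w w' = (\<exists>s. (st L n)\<^sup>*\<^sup>* w (rotate s w'))"

lemma rr_refl: "rr L n w w" unfolding rr_def by (rule exI[where x=0]) simp

lemma rr_trans: "rr L n w1 w2 \<Longrightarrow> rr L n w2 w3 \<Longrightarrow> rr L n w1 w3"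
proof -
  assume "rr L n w1 w2" "rr L n w2 w3"
  then obtain s t where a: "(st L n)\<^sup>*\<^sup>* w1 (rotate s w2)" and b: "(st L n)\<^sup>*\<^sup>* w2 (rotate t w3)"
    unfolding rr_def by blast
  have "(st L n)\<^sup>*\<^sup>* (rotate s w2) (rotate (s + t) w3)" using sts_rot[OF b, of s] by (simp add: rotate_rotate)
  then show ?thesis unfolding rr_def using rtranclp_trans[OF a] by blast
qed

lemma rr_intro:
  assumes "(st L n)\<^sup>*\<^sup>* (rotate a w) (rotate b w')" "length w = N" "0 < N"
  shows "rr L n w w'"
proof -
  define x where "x = N - a mod N"
  have sm: "a mod N < N" using assms(3) by simp
  have d: "N * (a div N) + a mod N = a" by (rule mult_div_mod_eq)
  have e: "x + a = N + N * (a div N)"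
    unfolding x_def using d sm by linarith
  have "(x + a) mod N = 0" unfolding e by simp
  then have "rotate (x + a) w = w" using assms(2) by (simp add: rotate_id)
  moreover have "(st L n)\<^sup>*\<^sup>* (rotate (x + a) w) (rotate (x + b) w')"
    using sts_rot[OF assms(1), of x] by (simp add: rotate_rotate)
  ultimately show ?thesis unfolding rr_def by auto
qed

abbreviation word :: "nat \<Rightarrow> nat list list \<Rightarrow> letter list" where
  "word n G \<equiv> wordl [0..<n] G"

lemma rr_from_move:
  assumes G: "valid L n G" and lG': "length G' = n" and lab: "\<forall>j<n. \<forall>x\<in>set (G'!j). x < n"
    and len: "length (wordl (rotate k [0..<n]) G') = length (wordl (rotate k [0..<n]) G)"
    and m: "mv n (rotate a (wordl (rotate k [0..<n]) G)) (wordl (rotate k [0..<n]) G')"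
    and L: "0 < L"
  shows "valid L n G' \<and> rr L n (word n G) (word n G')"
proof -
  obtain m1 where m1: "wordl (rotate k [0..<n]) G = rotate m1 (word n G)" using wordl_rotate by blast
  obtain m2 where m2: "wordl (rotate k [0..<n]) G' = rotate m2 (word n G')" using wordl_rotate by blast
  have lw: "length (word n G) = L" using G unfolding valid_def by simp
  have "length (word n G') = L" using len m1 m2 lw by simp
  then have v': "valid L n G'" using lG' lab unfolding valid_def by simp
  have o1: "rotate a (rotate m1 (word n G)) \<in> Omega L n" using valid_Omega[OF G] Omega_rotate by blast
  have o2: "rotate m2 (word n G') \<in> Omega L n" using valid_Omega[OF v'] Omega_rotate by blast
  have "st L n (rotate (a + m1) (word n G)) (rotate m2 (word n G'))"
    using o1 o2 m m1 m2 unfolding st_def by (simp add: rotate_rotate)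
  then have "rr L n (word n G) (word n G')"
    by (intro rr_intro[OF _ lw L]) auto
  then show ?thesis using v' by blast
qed

lemma rot_range_decomp:
  assumes n: "2 \<le> n" and k: "k < n"
  shows "\<exists>ms. rotate k [0..<n] = k # ms @ [prv n k] \<and> distinct (k # ms @ [prv n k])
     \<and> (ms @ [prv n k]) ! 0 = nxt n k"
proof -
  let ?xs = "rotate k [0..<n]"
  have len: "length ?xs = n" by simp
  then obtain a ys where xs: "?xs = a # ys" using n by (cases ?xs) auto
  have yne: "ys \<noteq> []" using xs len n by (cases ys) auto
  have "?xs ! 0 = k" using k by (simp add: nth_rotate)
  then have a: "a = k" using xs by simp
  have "last ?xs = ?xs ! (n - 1)" using len n by (simp add: last_conv_nth)
  also have "\<dots> = prv n k" unfolding prv_def using n by (simp add: nth_rotate add.commute)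
  finally have lst: "last ys = prv n k" using xs yne by simp
  have one: "?xs ! 1 = nxt n k" using n unfolding nxt_def by (simp add: nth_rotate add.commute)
  have "ys = butlast ys @ [prv n k]" using yne lst by (metis append_butlast_last_id)
  then have e: "?xs = k # butlast ys @ [prv n k]" using xs a by simp
  moreover have "distinct ?xs" by simp
  moreover have "(butlast ys @ [prv n k]) ! 0 = nxt n k" using one e by simp
  ultimately show ?thesis by metis
qed

lemma move3:
  assumes n: "2 \<le> n" and k: "k < n" and G: "valid L n G" and A: "G ! prv n k = A @ [x]" and x: "x \<noteq> k"
  shows "valid L n (G[prv n k := A, k := x # G!k]) \<and> rr L n (word n G) (word n (G[prv n k := A, k := x # G!k]))"
proof -
  let ?pk = "prv n k"
  let ?G' = "G[?pk := A, k := x # G!k]"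
  obtain ms where ms: "rotate k [0..<n] = k # ms @ [?pk]" and d: "distinct (k # ms @ [?pk])"
    using rot_range_decomp[OF n k] by blast
  have lG: "length G = n" using G unfolding valid_def by simp
  have pk: "?pk < n" unfolding prv_def using n by simp
  have kp: "k \<noteq> ?pk" using d by simp
  have G'k: "?G' ! k = x # G!k" using lG k by simp
  have G'p: "?G' ! ?pk = A" using lG pk kp by simp
  have G'j: "?G' ! j = G ! j" if "j \<noteq> k" "j \<noteq> ?pk" for j using that by simp
  have wms: "wordl ms ?G' = wordl ms G" using d by (intro wordl_cong) (auto intro!: G'j)
  let ?X = "Bul k # map Box (G!k) @ wordl ms G @ [Bul ?pk] @ map Box A"
  have w1: "wordl (rotate k [0..<n]) G = ?X @ [Box x]" using ms A by simp
  have w2: "wordl (rotate k [0..<n]) ?G' = [Bul k, Box x] @ (map Box (G!k) @ wordl ms G @ [Bul ?pk] @ map Box A)"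
    using ms G'k G'p wms by simp
  have "T3 n k (rotate (length ?X) (wordl (rotate k [0..<n]) G)) (wordl (rotate k [0..<n]) ?G')"
    unfolding T3_def w1 w2 rotate_append
    by (rule exI[where x=0], rule exI[where x=x]) (use x in simp)
  then have mvv: "mv n (rotate (length ?X) (wordl (rotate k [0..<n]) G)) (wordl (rotate k [0..<n]) ?G')"
    unfolding mv_def using k by blast
  have lab: "\<forall>j<n. \<forall>y\<in>set (?G'!j). y < n"
  proof (intro allI impI ballI)
    fix j y assume j: "j < n" and y: "y \<in> set (?G'!j)"
    have labG: "\<And>j y. j < n \<Longrightarrow> y \<in> set (G!j) \<Longrightarrow> y < n" using G unfolding valid_def by blast
    show "y < n"
    proof (cases "j = k")
      case True then show ?thesis using y G'k labG[OF pk] labG[OF k] A by auto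
    next
      case False
      show ?thesis
      proof (cases "j = ?pk")
        case True then show ?thesis using y G'p labG[OF pk] A False by auto
      next
        case False2: False
        then show ?thesis using y G'j[OF False False2] labG[OF j] by auto
      qed
    qed
  qed
  have "[0..<n] = 0 # [1..<n]" using n by (simp add: upt_conv_Cons)
  then have L: "0 < L" using G unfolding valid_def by auto
  show ?thesis
    by (rule rr_from_move[OF G _ lab _ mvv L]) (use lG w1 w2 in simp_all)
qed

lemma move4:
  assumes n: "2 \<le> n" and k: "k < n" and G: "valid L n G" and A: "G ! prv n k = A @ [k]"
  shows "valid L n (G[prv n k := A, k := G!k @ [nxt n k]]) \<and> rr L n (word n G) (word n (G[prv n k := A, k := G!k @ [nxt n k]]))"
proof -
  let ?pk = "prv n k"
  let ?G' = "G[?pk := A, k := G!k @ [nxt n k]]"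
  obtain ms where ms: "rotate k [0..<n] = k # ms @ [?pk]" and d: "distinct (k # ms @ [?pk])"
    and nx: "(ms @ [?pk]) ! 0 = nxt n k"
    using rot_range_decomp[OF n k] by blast
  have lG: "length G = n" using G unfolding valid_def by simp
  have pk: "?pk < n" unfolding prv_def using n by simp
  have nk: "nxt n k < n" unfolding nxt_def using n by simp
  have kp: "k \<noteq> ?pk" using d by simp
  have G'k: "?G' ! k = G!k @ [nxt n k]" using lG k by simp
  have G'p: "?G' ! ?pk = A" using lG pk kp by simp
  have G'j: "?G' ! j = G ! j" if "j \<noteq> k" "j \<noteq> ?pk" for j using that by simp
  have wms: "wordl ms ?G' = wordl ms G" using d by (intro wordl_cong) (auto intro!: G'j)
  obtain D where Y: "wordl ms G @ [Bul ?pk] @ map Box A = Bul (nxt n k) # D"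
  proof (cases ms)
    case Nil then show ?thesis using that nx by simp
  next
    case (Cons j ms') then show ?thesis using that nx by simp
  qed
  let ?X = "Bul k # map Box (G!k) @ wordl ms G @ [Bul ?pk] @ map Box A"
  have w1: "wordl (rotate k [0..<n]) G = ?X @ [Box k]" using ms A by simp
  have X: "?X = [Bul k] @ map Box (G!k) @ [Bul (nxt n k)] @ D" using Y by simp
  have w2: "wordl (rotate k [0..<n]) ?G' = [Bul k] @ map Box (G!k) @ [Box (nxt n k), Bul (nxt n k)] @ D"
    using ms G'k G'p wms Y by simp
  have "T4 n k (rotate (length ?X) (wordl (rotate k [0..<n]) G)) (wordl (rotate k [0..<n]) ?G')"
    unfolding T4_def w1 w2 rotate_append
    by (rule exI[where x=0], rule exI[where x="map Box (G!k)"], rule exI[where x=D]) (use X in simp)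
  then have mvv: "mv n (rotate (length ?X) (wordl (rotate k [0..<n]) G)) (wordl (rotate k [0..<n]) ?G')"
    unfolding mv_def using k by blast
  have labG: "\<And>j y. j < n \<Longrightarrow> y \<in> set (G!j) \<Longrightarrow> y < n" using G unfolding valid_def by blast
  have lab: "\<forall>j<n. \<forall>y\<in>set (?G'!j). y < n"
  proof (intro allI impI ballI)
    fix j y assume j: "j < n" and y: "y \<in> set (?G'!j)"
    show "y < n"
    proof (cases "j = k")
      case True then show ?thesis using y G'k labG[OF k] nk by auto
    next
      case False
      show ?thesis
      proof (cases "j = ?pk")
        case True then show ?thesis using y G'p labG[OF pk] A False by auto
      next
        case False2: False
        then show ?thesis using y G'j[OF False False2] labG[OF j] by auto
      qed
    qed
  qed
  have "[0..<n] = 0 # [1..<n]" using n by (simp add: upt_conv_Cons)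
  then have L: "0 < L" using G unfolding valid_def by auto
  have len: "length (wordl (rotate k [0..<n]) ?G') = length (wordl (rotate k [0..<n]) G)"
    using w1 w2 arg_cong[OF Y, of length] by simp
  show ?thesis
    by (rule rr_from_move[OF G _ lab len mvv L]) (use lG in simp)
qed

lemma drain:
  assumes n: "2 \<le> n" and k: "k < n"
  shows "\<And>G. valid L n G \<Longrightarrow> G ! prv n k = A \<Longrightarrow> \<exists>G'. valid L n G' \<and> rr L n (word n G) (word n G')
     \<and> G' ! prv n k = [] \<and> (\<forall>j. j \<noteq> k \<longrightarrow> j \<noteq> prv n k \<longrightarrow> G'!j = G!j)
     \<and> set (G'!k) \<subseteq> set (G!k) \<union> (\<lambda>y. if y = k then nxt n k else y) ` set A"
proof (induct A rule: rev_induct)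
  case Nil then show ?case by (intro exI[where x=G]) (auto intro: rr_refl)
next
  case (snoc x A)
  let ?pk = "prv n k"
  have lG: "length G = n" using snoc.prems unfolding valid_def by simp
  have pk: "?pk < n" unfolding prv_def using n by simp
  have kp: "k \<noteq> ?pk" using rot_range_decomp[OF n k] by auto
  obtain G1 where G1: "valid L n G1" "rr L n (word n G) (word n G1)" "G1 ! ?pk = A"
    "\<forall>j. j \<noteq> k \<longrightarrow> j \<noteq> ?pk \<longrightarrow> G1!j = G!j"
    "set (G1!k) = set (G!k) \<union> {(\<lambda>y. if y = k then nxt n k else y) x}"
  proof (cases "x = k")
    case True
    let ?G1 = "G[?pk := A, k := G!k @ [nxt n k]]"
    have "valid L n ?G1 \<and> rr L n (word n G) (word n ?G1)"
      using move4[OF n k snoc.prems(1)] snoc.prems(2) True by simp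
    moreover have "?G1 ! ?pk = A" "set (?G1!k) = set (G!k) \<union> {(\<lambda>y. if y = k then nxt n k else y) x}"
      using lG pk k kp True by auto
    moreover have "\<forall>j. j \<noteq> k \<longrightarrow> j \<noteq> ?pk \<longrightarrow> ?G1!j = G!j" by simp
    ultimately show ?thesis using that by blast
  next
    case False
    let ?G1 = "G[?pk := A, k := x # G!k]"
    have "valid L n ?G1 \<and> rr L n (word n G) (word n ?G1)"
      using move3[OF n k snoc.prems(1) _ False] snoc.prems(2) by simp
    moreover have "?G1 ! ?pk = A" "set (?G1!k) = set (G!k) \<union> {(\<lambda>y. if y = k then nxt n k else y) x}"
      using lG pk k kp False by auto
    moreover have "\<forall>j. j \<noteq> k \<longrightarrow> j \<noteq> ?pk \<longrightarrow> ?G1!j = G!j" by simp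
    ultimately show ?thesis using that by blast
  qed
  obtain G' where G': "valid L n G'" "rr L n (word n G1) (word n G')" "G' ! ?pk = []"
    "\<forall>j. j \<noteq> k \<longrightarrow> j \<noteq> ?pk \<longrightarrow> G'!j = G1!j"
    "set (G'!k) \<subseteq> set (G1!k) \<union> (\<lambda>y. if y = k then nxt n k else y) ` set A"
    using snoc.hyps[OF G1(1) G1(3)] by blast
  have s1: "set (G'!k) \<subseteq> set (G!k) \<union> {(\<lambda>y. if y = k then nxt n k else y) x} \<union> (\<lambda>y. if y = k then nxt n k else y) ` set A"
    using G'(5) G1(5) by blast
  have s2: "set (G'!k) \<subseteq> set (G!k) \<union> (\<lambda>y. if y = k then nxt n k else y) ` set (A @ [x])"
    using s1 by (simp only: set_append set_simps image_Un image_insert image_empty) blast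
  show ?case
  proof (intro exI[where x=G'] conjI)
    show "rr L n (word n G) (word n G')" using rr_trans[OF G1(2) G'(2)] .
    show "\<forall>j. j \<noteq> k \<longrightarrow> j \<noteq> ?pk \<longrightarrow> G'!j = G!j" using G'(4) G1(4) by simp
  qed (use G' s2 in auto)
qed

lemma prv_Suc: "Suc j < n \<Longrightarrow> prv n (Suc j) = j"
  unfolding prv_def by simp

lemma prv_0: "2 \<le> n \<Longrightarrow> prv n 0 = n - 1"
  unfolding prv_def by simp

lemma nxt_less: "Suc j < n \<Longrightarrow> nxt n j = Suc j"
  unfolding nxt_def by simp

lemma nxt_last: "1 \<le> n \<Longrightarrow> nxt n (n - 1) = 0"
  unfolding nxt_def by simp

lemma phase1:
  assumes n: "2 \<le> n" and G: "valid L n G"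
  shows "j \<le> n - 1 \<Longrightarrow> \<exists>G'. valid L n G' \<and> rr L n (word n G) (word n G') \<and> (\<forall>i<j. G'!i = [])"
proof (induct j)
  case 0 then show ?case using G rr_refl by blast
next
  case (Suc j)
  then obtain G1 where G1: "valid L n G1" "rr L n (word n G) (word n G1)" "\<forall>i<j. G1!i = []" by auto
  have sj: "Suc j < n" using Suc.prems n by simp
  obtain G' where G': "valid L n G'" "rr L n (word n G1) (word n G')" "G' ! prv n (Suc j) = []"
    "\<forall>i. i \<noteq> Suc j \<longrightarrow> i \<noteq> prv n (Suc j) \<longrightarrow> G'!i = G1!i"
    using drain[OF n sj G1(1) refl] by blast
  have "\<forall>i<Suc j. G'!i = []"
  proof (intro allI impI)
    fix i assume "i < Suc j"
    then show "G'!i = []" using G'(3,4) G1(3) prv_Suc[OF sj] by (cases "i = j") auto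
  qed
  then show ?case using G'(1) rr_trans[OF G1(2) G'(2)] by blast
qed

lemma phase2:
  assumes n: "2 \<le> n" and G: "valid L n G" and E: "\<forall>i<n-1. G!i = []"
  shows "j \<le> n - 2 \<Longrightarrow> \<exists>G'. valid L n G' \<and> rr L n (word n G) (word n G') \<and> (\<forall>i<n. i \<noteq> j \<longrightarrow> G'!i = [])
          \<and> (\<forall>y\<in>set (G'!j). Suc j \<le> y)"
proof (induct j)
  case 0
  have k0: "0 < n" using n by simp
  obtain G' where G': "valid L n G'" "rr L n (word n G) (word n G')" "G' ! prv n 0 = []"
    "\<forall>i. i \<noteq> 0 \<longrightarrow> i \<noteq> prv n 0 \<longrightarrow> G'!i = G!i"
    "set (G'!0) \<subseteq> set (G!0) \<union> (\<lambda>y. if y = 0 then nxt n 0 else y) ` set (G ! prv n 0)"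
    using drain[OF n k0 G refl] by blast
  have "G!0 = []" using E n by simp
  moreover have "nxt n 0 = 1" using n unfolding nxt_def by simp
  ultimately have "\<forall>y\<in>set (G'!0). Suc 0 \<le> y" using G'(5) by auto
  moreover have "\<forall>i<n. i \<noteq> 0 \<longrightarrow> G'!i = []"
  proof (intro allI impI)
    fix i assume "i < n" "i \<noteq> 0"
    then show "G'!i = []" using G'(3,4) E prv_0[OF n] by (cases "i = n - 1") auto
  qed
  ultimately show ?case using G'(1,2) by auto
next
  case (Suc j)
  then obtain G1 where G1: "valid L n G1" "rr L n (word n G) (word n G1)" "\<forall>i<n. i \<noteq> j \<longrightarrow> G1!i = []"
    "\<forall>y\<in>set (G1!j). Suc j \<le> y" by auto
  have sj: "Suc j < n" using Suc.prems n by simp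
  have ssj: "Suc (Suc j) < n" using Suc.prems n by simp
  obtain G' where G': "valid L n G'" "rr L n (word n G1) (word n G')" "G' ! prv n (Suc j) = []"
    "\<forall>i. i \<noteq> Suc j \<longrightarrow> i \<noteq> prv n (Suc j) \<longrightarrow> G'!i = G1!i"
    "set (G'!Suc j) \<subseteq> set (G1!Suc j) \<union> (\<lambda>y. if y = Suc j then nxt n (Suc j) else y) ` set (G1 ! prv n (Suc j))"
    using drain[OF n sj G1(1) refl] by blast
  have pj: "prv n (Suc j) = j" using prv_Suc[OF sj] .
  have nj: "nxt n (Suc j) = Suc (Suc j)" using nxt_less[OF ssj] .
  have "G1 ! Suc j = []" using G1(3) sj by simp
  then have "\<forall>y\<in>set (G'!Suc j). Suc (Suc j) \<le> y" using G'(5) G1(4) pj nj by force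
  moreover have "\<forall>i<n. i \<noteq> Suc j \<longrightarrow> G'!i = []"
  proof (intro allI impI)
    fix i assume "i < n" "i \<noteq> Suc j"
    then show "G'!i = []" using G'(3,4) G1(3) pj by (cases "i = j") auto
  qed
  ultimately show ?case using G'(1) rr_trans[OF G1(2) G'(2)] by auto
qed

definition canon :: "nat \<Rightarrow> nat \<Rightarrow> letter list" where
  "canon L n = map Bul [0..<n] @ replicate (L - n) (Box 0)"

lemma wordl_empty: "(\<forall>j\<in>set ks. G!j = []) \<Longrightarrow> wordl ks G = map Bul ks"
  by (induct ks) auto

lemma reach_canon:
  assumes n: "2 \<le> n" and G: "valid L n G"
  shows "rr L n (word n G) (canon L n)"
proof -
  obtain G1 where G1: "valid L n G1" "rr L n (word n G) (word n G1)" "\<forall>i<n-1. G1!i = []"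
    using phase1[OF n G, of "n - 1"] by auto
  obtain G2 where G2: "valid L n G2" "rr L n (word n G1) (word n G2)" "\<forall>i<n. i \<noteq> n - 2 \<longrightarrow> G2!i = []"
    and G24: "\<forall>y\<in>set (G2!(n-2)). Suc (n - 2) \<le> y"
    using phase2[OF n G1(1) G1(3), of "n - 2"] by blast
  have sn: "Suc (n - 2) = n - 1" using n by simp
  have k: "n - 1 < n" using n by simp
  have pk: "prv n (n - 1) = n - 2" using prv_Suc[of "n - 2" n] n by (simp add: Suc_diff_Suc numeral_2_eq_2)
  obtain G' where G': "valid L n G'" "rr L n (word n G2) (word n G')" "G' ! prv n (n - 1) = []"
    "\<forall>i. i \<noteq> n - 1 \<longrightarrow> i \<noteq> prv n (n - 1) \<longrightarrow> G'!i = G2!i"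
    "set (G'!(n - 1)) \<subseteq> set (G2!(n - 1)) \<union> (\<lambda>y. if y = n - 1 then nxt n (n - 1) else y) ` set (G2 ! prv n (n - 1))"
    using drain[OF n k G2(1) refl] by blast
  have "n - 2 < n" using n by simp
  then have lab: "\<forall>y\<in>set (G2!(n-2)). y < n" using G2(1) unfolding valid_def by blast
  have "G2!(n-1) = []" using G2(3) n by simp
  then have s: "set (G'!(n-1)) \<subseteq> {0}" using G'(5) G24 sn lab pk nxt_last[of n] n by force
  have e: "\<forall>i<n-1. G'!i = []"
  proof (intro allI impI)
    fix i assume i: "i < n - 1"
    show "G'!i = []"
    proof (cases "i = n - 2")
      case True then show ?thesis using G'(3) pk by simp
    next
      case False
      then have "G'!i = G2!i" using G'(4) i pk by auto
      then show ?thesis using G2(3) i False by auto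
    qed
  qed
  have upt: "[0..<n] = [0..<n-1] @ [n-1]" using upt_Suc_append[of 0 "n-1"] n by simp
  have w: "word n G' = map Bul [0..<n-1] @ [Bul (n-1)] @ map Box (G'!(n-1))"
    using e wordl_empty[of "[0..<n-1]" G'] by (simp add: upt)
  have rep: "G'!(n-1) = replicate (length (G'!(n-1))) 0" using s by (metis replicate_length_same singletonD subsetD)
  have "length (word n G') = L" using G'(1) unfolding valid_def by simp
  then have len: "length (G'!(n-1)) = L - n" using w n by simp
  have "word n G' = canon L n" unfolding canon_def using w rep len upt
    by (metis append.assoc map_append map_replicate list.simps(8) list.simps(9))
  then show ?thesis using rr_trans[OF G1(2) rr_trans[OF G2(2) G'(2)]] by simp
qed

definition Zw :: "nat \<Rightarrow> nat \<Rightarrow> nat \<Rightarrow> letter list" where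
  "Zw L n j = map Bul [0..<j] @ [Box j] @ map Bul [j..<n] @ replicate (L - n - 1) (Box 0)"

lemma Zw_Omega: "j < n \<Longrightarrow> n < L \<Longrightarrow> Zw L n j \<in> Omega L n"
  unfolding Zw_def
  by (rule Omega_intro[where r=0]) (use upt_add_eq_append[of 0 j "n - j"] in auto)

lemma canon_Omega: "0 < n \<Longrightarrow> n < L \<Longrightarrow> canon L n \<in> Omega L n"
  unfolding canon_def
  by (rule Omega_intro[where r=0]) auto

lemma rep_split: "0 < m \<Longrightarrow> replicate m x = replicate (m - 1) x @ [x]"
  by (metis Suc_diff_1 replicate_Suc replicate_append_same)

lemma canon_path:
  assumes n: "2 \<le> n" and L: "n < L"
  shows "(st L n)\<^sup>*\<^sup>* (rotate (L - 1) (canon L n)) (canon L n)"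
proof -
  let ?R = "replicate (L - n - 1) (Box 0)"
  have rep: "replicate (L - n) (Box 0) = ?R @ [Box 0]" using rep_split[of "L - n"] L by simp
  have c: "canon L n = (map Bul [0..<n] @ ?R) @ [Box 0]" unfolding canon_def rep by simp
  have "rotate (L - 1) (canon L n) = [Box 0] @ (map Bul [0..<n] @ ?R)"
  proof -
    have "length (map Bul [0..<n] @ ?R) = L - 1" using L by simp
    then show ?thesis unfolding c by (metis rotate_append)
  qed
  then have z0: "rotate (L - 1) (canon L n) = Zw L n 0" unfolding Zw_def by simp
  have steps: "j \<le> n - 1 \<Longrightarrow> (st L n)\<^sup>*\<^sup>* (Zw L n 0) (Zw L n j)" for j
  proof (induct j)
    case 0 then show ?case by simp
  next
    case (Suc j)
    have sj: "Suc j < n" using Suc.prems n by simp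
    have u1: "[j..<n] = j # Suc j # [Suc (Suc j)..<n]" using sj by (simp add: upt_conv_Cons)
    have u2: "[Suc j..<n] = Suc j # [Suc (Suc j)..<n]" using sj by (simp add: upt_conv_Cons)
    let ?D = "map Bul [Suc (Suc j)..<n] @ ?R @ map Bul [0..<j]"
    have r1: "rotate j (Zw L n j) = [Box j, Bul j] @ [] @ [Bul (nxt n j)] @ ?D"
    proof -
      have "Zw L n j = map Bul [0..<j] @ ([Box j] @ map Bul [j..<n] @ ?R)" unfolding Zw_def by simp
      then have "rotate j (Zw L n j) = ([Box j] @ map Bul [j..<n] @ ?R) @ map Bul [0..<j]"
        by (metis rotate_append length_map length_upt diff_zero)
      then show ?thesis using u1 nxt_less[OF sj] by simp
    qed
    have r2: "rotate j (Zw L n (Suc j)) = [Bul j] @ [] @ [Box (nxt n j), Bul (nxt n j)] @ ?D"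
    proof -
      have "Zw L n (Suc j) = map Bul [0..<j] @ ([Bul j, Box (Suc j)] @ map Bul [Suc j..<n] @ ?R)" unfolding Zw_def by simp
      then have "rotate j (Zw L n (Suc j)) = ([Bul j, Box (Suc j)] @ map Bul [Suc j..<n] @ ?R) @ map Bul [0..<j]"
        by (metis rotate_append length_map length_upt diff_zero)
      then show ?thesis using u2 nxt_less[OF sj] by simp
    qed
    have "T4 n j (Zw L n j) (Zw L n (Suc j))"
      unfolding T4_def using r1 r2 by (intro exI[where x=j] exI[where x="[]"] exI[where x="?D"]) simp
    moreover have jn: "j < n" using sj by simp
    ultimately have "st L n (Zw L n j) (Zw L n (Suc j))"
      unfolding st_def mv_def using Zw_Omega[OF jn L] Zw_Omega[OF sj L] by blast
    then show ?case using Suc by (meson Suc_leD rtranclp.rtrancl_into_rtrancl sj less_imp_le_nat Suc_le_lessD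
        le_diff_conv2 le_trans) 
  qed
  have last: "st L n (Zw L n (n - 1)) (canon L n)"
  proof -
    have k: "n - 1 < n" using n by simp
    let ?D = "map Bul [1..<n-1]"
    have u: "[0..<n-1] = 0 # [1..<n-1]" using n by (simp add: upt_conv_Cons)
    have un: "[n-1..<n] = [n-1]" using n by (simp add: upt_conv_Cons)
    have r1: "rotate (n-1) (Zw L n (n-1)) = [Box (n-1), Bul (n-1)] @ ?R @ [Bul (nxt n (n-1))] @ ?D"
    proof -
      have "Zw L n (n-1) = map Bul [0..<n-1] @ ([Box (n-1), Bul (n-1)] @ ?R)" unfolding Zw_def using un by simp
      then have "rotate (n-1) (Zw L n (n-1)) = ([Box (n-1), Bul (n-1)] @ ?R) @ map Bul [0..<n-1]"
        by (metis rotate_append length_map length_upt diff_zero)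
      then show ?thesis using u nxt_last[of n] n by simp
    qed
    have r2: "rotate (n-1) (canon L n) = [Bul (n-1)] @ ?R @ [Box (nxt n (n-1)), Bul (nxt n (n-1))] @ ?D"
    proof -
      have upt: "[0..<n] = [0..<n-1] @ [n-1]" using upt_Suc_append[of 0 "n-1"] n by simp
      have "canon L n = map Bul [0..<n-1] @ ([Bul (n-1)] @ ?R @ [Box 0])" unfolding canon_def rep upt by simp
      then have "rotate (n-1) (canon L n) = ([Bul (n-1)] @ ?R @ [Box 0]) @ map Bul [0..<n-1]"
        by (metis rotate_append length_map length_upt diff_zero)
      then show ?thesis using u nxt_last[of n] n by simp
    qed
    have "\<forall>c\<in>set ?R. is_box c" by simp
    then have "T4 n (n-1) (Zw L n (n-1)) (canon L n)"
      unfolding T4_def using r1 r2 by blast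
    then show ?thesis unfolding st_def mv_def using Zw_Omega[OF k L] canon_Omega[OF _ L] n k by blast
  qed
  have "(st L n)\<^sup>*\<^sup>* (Zw L n 0) (Zw L n (n - 1))" using steps by simp
  then show ?thesis using z0 last by (metis rtranclp.rtrancl_into_rtrancl)
qed

lemma length_canon: "n < L \<Longrightarrow> length (canon L n) = L" unfolding canon_def by simp

lemma rot_all:
  assumes n: "2 \<le> n" and L: "n < L"
  shows "(st L n)\<^sup>*\<^sup>* (rotate s (canon L n)) (canon L n)"
proof -
  let ?c = "canon L n"
  have lc: "length ?c = L" using length_canon[OF L] .
  have one: "(st L n)\<^sup>*\<^sup>* (rotate u ?c) (rotate (Suc u) ?c)" for u
  proof -
    have "(st L n)\<^sup>*\<^sup>* (rotate (Suc u) (rotate (L - 1) ?c)) (rotate (Suc u) ?c)"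
      using sts_rot[OF canon_path[OF n L]] .
    moreover have "rotate (Suc u) (rotate (L - 1) ?c) = rotate u ?c"
    proof -
      have "Suc u + (L - 1) = u + L" using L by simp
      then have "rotate (Suc u) (rotate (L - 1) ?c) = rotate (u + L) ?c" by (simp add: rotate_rotate)
      also have "\<dots> = rotate u ?c"
        using lc by (metis rotate_conv_mod mod_add_self2)
      finally show ?thesis .
    qed
    ultimately show ?thesis by simp
  qed
  have many: "(st L n)\<^sup>*\<^sup>* (rotate u ?c) (rotate (u + t) ?c)" for u t
  proof (induct t)
    case 0 then show ?case by simp
  next
    case (Suc t) then show ?case using one[of "u + t"] by (simp add: rtranclp.rtrancl_into_rtrancl)
  qed
  have "rotate s ?c = rotate (s mod L) ?c" using lc by (metis rotate_conv_mod)
  moreover have "rotate (s mod L + (L - s mod L)) ?c = ?c"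
  proof -
    have "s mod L < L" using L by simp
    then have "s mod L + (L - s mod L) = L" by simp
    then show ?thesis using lc by simp
  qed
  ultimately show ?thesis using many[of "s mod L" "L - s mod L"] by simp
qed

lemma all_reach:
  assumes n: "2 \<le> n" and L: "n < L" and w: "w \<in> Omega L n"
  shows "(st L n)\<^sup>*\<^sup>* w (canon L n)"
proof -
  obtain s G where G: "valid L n G" and ws: "w = rotate s (word n G)"
    using Omega_decomp[OF w] n by auto
  obtain t where t: "(st L n)\<^sup>*\<^sup>* (word n G) (rotate t (canon L n))"
    using reach_canon[OF n G] unfolding rr_def by blast
  have "(st L n)\<^sup>*\<^sup>* w (rotate (s + t) (canon L n))"
    using sts_rot[OF t, of s] ws by (simp add: rotate_rotate)
  then show ?thesis using rot_all[OF n L] by (meson rtranclp_trans)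
qed

lemma kernel_exists:
  fixes R :: "'a \<Rightarrow> 'a \<Rightarrow> real"
  assumes fin: "finite S" and ne: "S \<noteq> {}"
  shows "\<exists>v. (\<exists>w\<in>S. v w \<noteq> 0) \<and> (\<forall>w\<in>S. (\<Sum>w'\<in>S. v w' * R w' w) = v w * (\<Sum>w'\<in>S. R w w'))"
proof -
  let ?N = "card S"
  obtain e where e: "bij_betw e {0..<?N} S" using ex_bij_betw_nat_finite[OF fin] by blast
  have inj: "inj_on e {0..<?N}" using e bij_betw_imp_inj_on by blast
  have eS: "i < ?N \<Longrightarrow> e i \<in> S" for i using e bij_betwE by fastforce
  have sumS: "(\<Sum>w\<in>S. f w) = (\<Sum>i\<in>{0..<?N}. f (e i))" for f :: "'a \<Rightarrow> real"
    using sum.reindex_bij_betw[OF e, of f] by simp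
  define out where "out w = (\<Sum>w'\<in>S. R w w')" for w
  define M where "M = mat ?N ?N (\<lambda>(i,j). R (e j) (e i) - (if i = j then out (e i) else 0))"
  have MC: "M \<in> carrier_mat ?N ?N" by (simp add: M_def)
  have Npos: "0 < ?N" using fin ne card_gt_0_iff by blast
  let ?one = "vec ?N (\<lambda>_. 1::real)"
  have t: "transpose_mat M *\<^sub>v ?one = 0\<^sub>v ?N"
  proof (rule eq_vecI)
    fix j assume "j < dim_vec (0\<^sub>v ?N :: real vec)"
    then have j: "j < ?N" by simp
    have "(transpose_mat M *\<^sub>v ?one) $ j = (\<Sum>i\<in>{0..<?N}. M $$ (i, j))"
      using j MC by (simp add: scalar_prod_def)
    also have "\<dots> = (\<Sum>i\<in>{0..<?N}. R (e j) (e i) - (if i = j then out (e i) else 0))"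
      using j by (intro sum.cong) (auto simp: M_def)
    also have "\<dots> = (\<Sum>i\<in>{0..<?N}. R (e j) (e i)) - out (e j)"
      using j by (simp add: sum_subtractf)
    also have "\<dots> = 0" unfolding out_def sumS[of "R (e j)"] by simp
    finally show "(transpose_mat M *\<^sub>v ?one) $ j = 0\<^sub>v ?N $ j" using j by simp
  qed (use MC in simp)
  have one_nz: "?one \<noteq> 0\<^sub>v ?N"
  proof
    assume "?one = 0\<^sub>v ?N"
    then have "?one $ 0 = (0\<^sub>v ?N :: real vec) $ 0" by simp
    then show False using Npos by simp
  qed
  have TC: "transpose_mat M \<in> carrier_mat ?N ?N" using MC by simp
  have oneC: "?one \<in> carrier_vec ?N" by simp
  have "det (transpose_mat M) = 0"
    using det_0_iff_vec_prod_zero_field[OF TC] oneC t one_nz by blast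
  then have "det M = 0" using det_transpose[OF MC] by simp
  then obtain x where x: "x \<in> carrier_vec ?N" "x \<noteq> 0\<^sub>v ?N" "M *\<^sub>v x = 0\<^sub>v ?N"
    using det_0_iff_vec_prod_zero_field[OF MC] by blast
  define v where "v w = x $ (the_inv_into {0..<?N} e w)" for w
  have ve: "i < ?N \<Longrightarrow> v (e i) = x $ i" for i
    unfolding v_def using the_inv_into_f_f[OF inj] by simp
  have nz: "\<exists>w\<in>S. v w \<noteq> 0"
  proof (rule ccontr)
    assume "\<not> ?thesis"
    then have "\<forall>i<?N. x $ i = 0" using ve eS by fastforce
    then have "x = 0\<^sub>v ?N" using x(1) by (intro eq_vecI) auto
    then show False using x(2) by simp
  qed
  have bal: "\<forall>w\<in>S. (\<Sum>w'\<in>S. v w' * R w' w) = v w * (\<Sum>w'\<in>S. R w w')"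
  proof
    fix w assume w: "w \<in> S"
    then obtain i where i: "i < ?N" "w = e i" using e by (metis atLeastLessThan_iff bij_betw_iff_bijections)
    have "0 = (M *\<^sub>v x) $ i" using x(3) i by simp
    also have "\<dots> = (\<Sum>j\<in>{0..<?N}. M $$ (i, j) * x $ j)"
      using i MC x(1) by (simp add: scalar_prod_def)
    also have "\<dots> = (\<Sum>j\<in>{0..<?N}. R (e j) (e i) * x $ j - (if i = j then out (e i) * x $ j else 0))"
      using i by (intro sum.cong) (auto simp: M_def left_diff_distrib)
    also have "\<dots> = (\<Sum>j\<in>{0..<?N}. R (e j) (e i) * x $ j) - out (e i) * x $ i"
      using i by (simp add: sum_subtractf)
    finally have eq: "(\<Sum>j\<in>{0..<?N}. R (e j) (e i) * x $ j) = out (e i) * x $ i" by simp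
    have "(\<Sum>w'\<in>S. v w' * R w' w) = (\<Sum>j\<in>{0..<?N}. v (e j) * R (e j) w)" by (rule sumS)
    also have "\<dots> = (\<Sum>j\<in>{0..<?N}. R (e j) (e i) * x $ j)"
      using i by (intro sum.cong) (auto simp: ve mult.commute)
    finally show "(\<Sum>w'\<in>S. v w' * R w' w) = v w * (\<Sum>w'\<in>S. R w w')"
      using eq i ve[OF i(1)] unfolding out_def by (simp add: mult.commute)
  qed
  show ?thesis using nz bal by blast
qed

definition bal :: "'a set \<Rightarrow> ('a \<Rightarrow> 'a \<Rightarrow> real) \<Rightarrow> ('a \<Rightarrow> real) \<Rightarrow> bool" where
  "bal S R u = (\<forall>w\<in>S. (\<Sum>w'\<in>S. u w' * R w' w) = u w * (\<Sum>w'\<in>S. R w w'))"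

lemma bal_lin: "bal S R u \<Longrightarrow> bal S R v \<Longrightarrow> bal S R (\<lambda>w. u w - a * v w)"
  unfolding bal_def
  by (simp add: left_diff_distrib sum_subtractf mult.assoc sum_distrib_left[symmetric])

lemma bal_scale: "bal S R u \<Longrightarrow> bal S R (\<lambda>w. a * u w)"
  unfolding bal_def by (simp add: mult.assoc sum_distrib_left[symmetric])

lemma bal_abs:
  assumes fin: "finite S" and R: "\<forall>x\<in>S. \<forall>y\<in>S. 0 \<le> R x y" and b: "bal S R v"
  shows "bal S R (\<lambda>w. \<bar>v w\<bar>)"
proof -
  define out where "out w = (\<Sum>w'\<in>S. R w w')" for w
  define d where "d w = (\<Sum>w'\<in>S. \<bar>v w'\<bar> * R w' w) - \<bar>v w\<bar> * out w" for w
  have ge: "0 \<le> d w" if w: "w \<in> S" for w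
  proof -
    have o: "0 \<le> out w" unfolding out_def using R w by (simp add: sum_nonneg)
    have "\<bar>v w\<bar> * out w = \<bar>v w * out w\<bar>" using o by (simp add: abs_mult)
    also have "\<dots> = \<bar>\<Sum>w'\<in>S. v w' * R w' w\<bar>" using b w unfolding bal_def out_def by simp
    also have "\<dots> \<le> (\<Sum>w'\<in>S. \<bar>v w' * R w' w\<bar>)" by (rule sum_abs)
    also have "\<dots> = (\<Sum>w'\<in>S. \<bar>v w'\<bar> * R w' w)"
      using R w by (intro sum.cong) (auto simp: abs_mult)
    finally show ?thesis unfolding d_def by simp
  qed
  have "(\<Sum>w\<in>S. \<Sum>w'\<in>S. \<bar>v w'\<bar> * R w' w) = (\<Sum>w'\<in>S. \<Sum>w\<in>S. \<bar>v w'\<bar> * R w' w)"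
    by (rule sum.swap)
  also have "\<dots> = (\<Sum>w'\<in>S. \<bar>v w'\<bar> * out w')" unfolding out_def by (simp add: sum_distrib_left)
  finally have "(\<Sum>w\<in>S. d w) = 0" unfolding d_def by (simp add: sum_subtractf)
  then have "\<forall>w\<in>S. d w = 0" using sum_nonneg_eq_0_iff[OF fin] ge by blast
  then show ?thesis unfolding bal_def d_def out_def by simp
qed

lemma zero_prop:
  assumes fin: "finite S" and R: "\<forall>x\<in>S. \<forall>y\<in>S. 0 \<le> R x y" and u: "\<forall>x\<in>S. 0 \<le> u x"
    and b: "bal S R u" and w: "w \<in> S" "u w = 0" and w': "w' \<in> S" "0 < R w' w"
  shows "u w' = 0"
proof -
  have "(\<Sum>x\<in>S. u x * R x w) = 0" using b w unfolding bal_def by simp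
  moreover have "\<forall>x\<in>S. 0 \<le> u x * R x w" using u R w by simp
  ultimately have "\<forall>x\<in>S. u x * R x w = 0" using sum_nonneg_eq_0_iff[OF fin, of "\<lambda>x. u x * R x w"] by simp
  then have "u w' * R w' w = 0" using w' by blast
  then show ?thesis using w' by simp
qed

lemma zero_all:
  assumes fin: "finite S" and R: "\<forall>x\<in>S. \<forall>y\<in>S. 0 \<le> R x y" and u: "\<forall>x\<in>S. 0 \<le> u x"
    and b: "bal S R u" and c: "c \<in> S" "u c = 0"
    and E: "\<And>x y. E x y \<Longrightarrow> x \<in> S \<and> y \<in> S \<and> 0 < R x y"
    and reach: "E\<^sup>*\<^sup>* w c" and w: "w \<in> S"
  shows "u w = 0"
  using reach w
proof (induct rule: converse_rtranclp_induct)
  case base then show ?case using c by simp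
next
  case (step x y)
  have y: "y \<in> S" "0 < R x y" using E[OF step(1)] by auto
  have "u y = 0" using step(3) y(1) by simp
  then show ?case using zero_prop[OF fin R u b y(1) _ step(4) y(2)] by simp
qed

lemma Omega_finite: "finite (Omega L n)"
proof -
  let ?A = "Bul ` {..<n} \<union> Box ` {..<n}"
  have "Omega L n \<subseteq> {xs. set xs \<subseteq> ?A \<and> length xs = L}" unfolding Omega_def by auto
  moreover have "finite {xs. set xs \<subseteq> ?A \<and> length xs = L}" by (rule finite_lists_length_eq) simp
  ultimately show ?thesis by (rule finite_subset)
qed

lemma rate_nonneg: "(\<forall>k<n. 0 < p k) \<Longrightarrow> (\<forall>k<n. 0 < q k) \<Longrightarrow> 0 \<le> rate n p q w w'"
  unfolding rate_def
proof (intro sum_nonneg)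
  fix j assume p: "\<forall>k<n. 0 < p k" and q: "\<forall>k<n. 0 < q k" and "j \<in> {..<n}"
  then have "0 < p j" "0 < q j" by auto
  then show "0 \<le> (if T1 n j w w' then p j else 0) + (if T2 n j w w' then p j else 0)
    + (if T3 n j w w' then q j else 0) + (if T4 n j w w' then q j else 0)" by simp
qed

lemma rate_pos:
  assumes p: "\<forall>k<n. 0 < p k" and q: "\<forall>k<n. 0 < q k" and m: "mv n w w'"
  shows "0 < rate n p q w w'"
proof -
  obtain k where k: "k < n" "T1 n k w w' \<or> T2 n k w w' \<or> T3 n k w w' \<or> T4 n k w w'"
    using m unfolding mv_def by blast
  define f where "f j = (if T1 n j w w' then p j else 0) + (if T2 n j w w' then p j else 0)
    + (if T3 n j w w' then q j else 0) + (if T4 n j w w' then q j else 0)" for j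
  have fnn: "\<forall>j\<in>{..<n}. 0 \<le> f j"
  proof
    fix j assume "j \<in> {..<n}"
    then have "0 < p j" "0 < q j" using p q by auto
    then show "0 \<le> f j" unfolding f_def by simp
  qed
  have "0 < p k" "0 < q k" using p q k by auto
  then have "0 < f k" unfolding f_def using k(2) by auto
  also have "f k \<le> (\<Sum>j<n. f j)" using k fnn by (intro member_le_sum) auto
  finally show ?thesis unfolding rate_def f_def by simp
qed

lemma bal_cong: "(\<And>w. w \<in> S \<Longrightarrow> u w = u' w) \<Longrightarrow> bal S R u = bal S R u'"
  unfolding bal_def by simp

lemma stationary_iff: "stationary L n p q \<pi> \<longleftrightarrow>
   (\<forall>w. w \<notin> Omega L n \<longrightarrow> \<pi> w = 0) \<and> (\<forall>w\<in>Omega L n. 0 \<le> \<pi> w) \<and> (\<Sum>w\<in>Omega L n. \<pi> w) = 1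
   \<and> bal (Omega L n) (rate n p q) \<pi>"
  unfolding stationary_def bal_def by simp

lemma stat_ex1:
  assumes n: "2 \<le> n" and L: "n < L" and p: "\<forall>k<n. 0 < p k" and q: "\<forall>k<n. 0 < q k"
  shows "\<exists>!\<pi>. stationary L n p q \<pi>"
proof -
  let ?S = "Omega L n"
  let ?R = "rate n p q"
  let ?c = "canon L n"
  have fin: "finite ?S" by (rule Omega_finite)
  have Rnn: "\<forall>x\<in>?S. \<forall>y\<in>?S. 0 \<le> ?R x y" using rate_nonneg[OF p q] by blast
  have cS: "?c \<in> ?S" using canon_Omega[OF _ L] n by simp
  have E: "\<And>x y. st L n x y \<Longrightarrow> x \<in> ?S \<and> y \<in> ?S \<and> 0 < ?R x y"
    unfolding st_def using rate_pos[OF p q] by blast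
  have reach: "\<And>w. w \<in> ?S \<Longrightarrow> (st L n)\<^sup>*\<^sup>* w ?c" using all_reach[OF n L] by blast
  have kill: "\<forall>w\<in>?S. u w = 0" if u: "\<forall>x\<in>?S. 0 \<le> u x" "bal ?S ?R u" "u ?c = 0" for u
  proof
    fix w assume w: "w \<in> ?S"
    show "u w = 0" by (rule zero_all[OF fin Rnn u(1) u(2) cS u(3) E reach[OF w] w])
  qed
  have pos: "\<pi> ?c \<noteq> 0" if st: "stationary L n p q \<pi>" for \<pi>
  proof
    assume "\<pi> ?c = 0"
    then have "\<forall>w\<in>?S. \<pi> w = 0" using kill st unfolding stationary_iff by blast
    then have "(\<Sum>w\<in>?S. \<pi> w) = 0" by simp
    then show False using st unfolding stationary_iff by simp
  qed
  have uniq: "\<pi>1 = \<pi>2" if s1: "stationary L n p q \<pi>1" and s2: "stationary L n p q \<pi>2" for \<pi>1 \<pi>2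
  proof -
    define a where "a = \<pi>1 ?c / \<pi>2 ?c"
    define v where "v w = \<pi>1 w - a * \<pi>2 w" for w
    have bv: "bal ?S ?R v" unfolding v_def using bal_lin s1 s2 unfolding stationary_iff by blast
    have vc: "v ?c = 0" unfolding v_def a_def using pos[OF s2] by simp
    have absb: "bal ?S ?R (\<lambda>w. \<bar>v w\<bar>)" by (rule bal_abs[OF fin Rnn bv])
    have nn: "\<forall>x\<in>?S. 0 \<le> \<bar>v x\<bar>" by simp
    have z: "\<bar>v ?c\<bar> = 0" using vc by simp
    have "\<forall>w\<in>?S. \<bar>v w\<bar> = 0" by (rule kill[OF nn absb z])
    then have eq: "\<forall>w\<in>?S. \<pi>1 w = a * \<pi>2 w" unfolding v_def by simp
    have "1 = (\<Sum>w\<in>?S. \<pi>1 w)" using s1 unfolding stationary_iff by simp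
    also have "\<dots> = (\<Sum>w\<in>?S. a * \<pi>2 w)" using eq by simp
    also have "\<dots> = a" using s2 unfolding stationary_iff by (simp add: sum_distrib_left[symmetric])
    finally have "a = 1" by simp
    then have "\<forall>w\<in>?S. \<pi>1 w = \<pi>2 w" using eq by simp
    moreover have "\<forall>w. w \<notin> ?S \<longrightarrow> \<pi>1 w = \<pi>2 w" using s1 s2 unfolding stationary_iff by simp
    ultimately show ?thesis by blast
  qed
  obtain v where v: "\<exists>w\<in>?S. v w \<noteq> 0" "bal ?S ?R v"
    using kernel_exists[OF fin, of ?R] cS unfolding bal_def by blast
  have bav: "bal ?S ?R (\<lambda>w. \<bar>v w\<bar>)" by (rule bal_abs[OF fin Rnn v(2)])
  define s where "s = (\<Sum>w\<in>?S. \<bar>v w\<bar>)"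
  obtain w0 where w0: "w0 \<in> ?S" "v w0 \<noteq> 0" using v(1) by blast
  have "\<bar>v w0\<bar> \<le> s" unfolding s_def using w0 fin by (intro member_le_sum) auto
  then have spos: "0 < s" using w0 by simp
  define \<pi> where "\<pi> w = (if w \<in> ?S then \<bar>v w\<bar> / s else 0)" for w
  have "bal ?S ?R (\<lambda>w. (1 / s) * \<bar>v w\<bar>)" by (rule bal_scale[OF bav])
  then have "bal ?S ?R \<pi>" by (subst bal_cong[where u'="\<lambda>w. (1 / s) * \<bar>v w\<bar>"]) (auto simp: \<pi>_def)
  moreover have "(\<Sum>w\<in>?S. \<pi> w) = 1"
  proof -
    have "(\<Sum>w\<in>?S. \<pi> w) = (\<Sum>w\<in>?S. \<bar>v w\<bar> / s)" unfolding \<pi>_def by simp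
    also have "\<dots> = s / s" unfolding s_def by (rule sum_divide_distrib[symmetric])
    finally show ?thesis using spos by simp
  qed
  moreover have "\<forall>w. w \<notin> ?S \<longrightarrow> \<pi> w = 0" "\<forall>w\<in>?S. 0 \<le> \<pi> w" unfolding \<pi>_def using spos by auto
  ultimately have "stationary L n p q \<pi>" unfolding stationary_iff by blast
  then show ?thesis using uniq by blast
qed

lemma stat_dist_char:
  assumes n: "2 \<le> n" and L: "n < L" and p: "\<forall>k<n. 0 < p k" and q: "\<forall>k<n. 0 < q k"
  shows "stationary L n p q (stat_dist L n p q)"
    and "stationary L n p q \<pi> \<Longrightarrow> stat_dist L n p q = \<pi>"
  using stat_ex1[OF assms] unfolding stat_dist_def by (metis theI')+

fun rl :: "(nat \<Rightarrow> nat) \<Rightarrow> letter \<Rightarrow> letter" where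
  "rl f (Bul k) = Bul (f k)" | "rl f (Box k) = Box (f k)"

definition tau :: "nat \<Rightarrow> nat \<Rightarrow> nat" where "tau n k = (if k < n then nxt n k else k)"
definition tau' :: "nat \<Rightarrow> nat \<Rightarrow> nat" where "tau' n k = (if k < n then prv n k else k)"

lemma prv_lt: "0 < n \<Longrightarrow> prv n k < n" unfolding prv_def by simp
lemma nxt_lt: "0 < n \<Longrightarrow> nxt n k < n" unfolding nxt_def by simp

lemma nxt_prv: "k < n \<Longrightarrow> nxt n (prv n k) = k"
proof -
  assume k: "k < n"
  have "nxt n (prv n k) = ((k + n - 1) mod n + 1) mod n" unfolding nxt_def prv_def by simp
  also have "\<dots> = (k + n - 1 + 1) mod n" by (rule mod_add_left_eq)
  also have "k + n - 1 + 1 = k + n" using k by simp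
  finally show ?thesis using k by simp
qed

lemma prv_nxt: "k < n \<Longrightarrow> prv n (nxt n k) = k"
proof -
  assume k: "k < n"
  have "prv n (nxt n k) = ((k + 1) mod n + (n - 1)) mod n" unfolding nxt_def prv_def using k by simp
  also have "\<dots> = (k + 1 + (n - 1)) mod n" by (rule mod_add_left_eq)
  also have "k + 1 + (n - 1) = k + n" using k by simp
  finally show ?thesis using k by simp
qed

lemma tau'_tau: "tau' n (tau n k) = k"
  unfolding tau_def tau'_def using prv_nxt nxt_lt by (cases "k < n") auto

lemma tau_tau': "tau n (tau' n k) = k"
  unfolding tau_def tau'_def using nxt_prv prv_lt by (cases "k < n") auto

lemma tau_lt: "k < n \<Longrightarrow> tau n k < n" unfolding tau_def using nxt_lt by auto
lemma tau'_lt: "k < n \<Longrightarrow> tau' n k < n" unfolding tau'_def using prv_lt by auto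

lemma tau_inj: "tau n a = tau n b \<Longrightarrow> a = b" by (metis tau'_tau)
lemma tau'_inj: "tau' n a = tau' n b \<Longrightarrow> a = b" by (metis tau_tau')

lemma tau_prv: "k < n \<Longrightarrow> tau n (prv n k) = prv n (tau n k)"
  unfolding tau_def using nxt_prv prv_nxt prv_lt nxt_lt by auto
lemma tau_nxt: "k < n \<Longrightarrow> tau n (nxt n k) = nxt n (tau n k)"
  unfolding tau_def using nxt_lt by auto
lemma tau'_prv: "k < n \<Longrightarrow> tau' n (prv n k) = prv n (tau' n k)"
  unfolding tau'_def using prv_lt by auto
lemma tau'_nxt: "k < n \<Longrightarrow> tau' n (nxt n k) = nxt n (tau' n k)"
  unfolding tau'_def using nxt_prv prv_nxt prv_lt nxt_lt by auto

lemma rl_inv1: "rl (tau' n) (rl (tau n) x) = x" by (cases x) (auto simp: tau'_tau)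
lemma rl_inv2: "rl (tau n) (rl (tau' n) x) = x" by (cases x) (auto simp: tau_tau')
lemma map_rl_inv1: "map (rl (tau' n)) (map (rl (tau n)) w) = w" by (induct w) (auto simp: rl_inv1)
lemma map_rl_inv2: "map (rl (tau n)) (map (rl (tau' n)) w) = w" by (induct w) (auto simp: rl_inv2)

lemma is_box_rl[simp]: "is_box (rl f c) = is_box c" by (cases c) auto

lemma T1_rl:
  assumes "T1 n k w w'" and inj: "\<And>a b. f a = f b \<Longrightarrow> a = b"
  shows "T1 n (f k) (map (rl f) w) (map (rl f) w')"
proof -
  obtain r i D where h: "i \<noteq> k" "rotate r w = [Bul k, Box i] @ D" "rotate r w' = [Box i, Bul k] @ D"
    using assms(1) unfolding T1_def by blast
  have "rotate r (map (rl f) w) = [Bul (f k), Box (f i)] @ map (rl f) D" using h by (simp add: rotate_map)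
  moreover have "rotate r (map (rl f) w') = [Box (f i), Bul (f k)] @ map (rl f) D" using h by (simp add: rotate_map)
  moreover have "f i \<noteq> f k" using h(1) inj by blast
  ultimately show ?thesis unfolding T1_def by blast
qed

lemma T3_rl:
  assumes "T3 n k w w'" and inj: "\<And>a b. f a = f b \<Longrightarrow> a = b"
  shows "T3 n (f k) (map (rl f) w) (map (rl f) w')"
proof -
  obtain r i D where h: "i \<noteq> k" "rotate r w = [Box i, Bul k] @ D" "rotate r w' = [Bul k, Box i] @ D"
    using assms(1) unfolding T3_def by blast
  have "rotate r (map (rl f) w) = [Box (f i), Bul (f k)] @ map (rl f) D" using h by (simp add: rotate_map)
  moreover have "rotate r (map (rl f) w') = [Bul (f k), Box (f i)] @ map (rl f) D" using h by (simp add: rotate_map)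
  moreover have "f i \<noteq> f k" using h(1) inj by blast
  ultimately show ?thesis unfolding T3_def by blast
qed

lemma T2_rl:
  assumes "T2 n k w w'" and fp: "f (prv n k) = prv n (f k)"
  shows "T2 n (f k) (map (rl f) w) (map (rl f) w')"
proof -
  obtain r C D where h: "\<forall>c\<in>set C. is_box c" "rotate r w = [Bul (prv n k)] @ C @ [Bul k, Box k] @ D"
     "rotate r w' = [Bul (prv n k), Box (prv n k)] @ C @ [Bul k] @ D"
    using assms(1) unfolding T2_def by blast
  have "rotate r (map (rl f) w) = [Bul (prv n (f k))] @ map (rl f) C @ [Bul (f k), Box (f k)] @ map (rl f) D"
    using h fp by (simp add: rotate_map)
  moreover have "rotate r (map (rl f) w') = [Bul (prv n (f k)), Box (prv n (f k))] @ map (rl f) C @ [Bul (f k)] @ map (rl f) D"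
    using h fp by (simp add: rotate_map)
  moreover have "\<forall>c\<in>set (map (rl f) C). is_box c" using h(1) by auto
  ultimately show ?thesis unfolding T2_def by blast
qed

lemma T4_rl:
  assumes "T4 n k w w'" and fp: "f (nxt n k) = nxt n (f k)"
  shows "T4 n (f k) (map (rl f) w) (map (rl f) w')"
proof -
  obtain r C D where h: "\<forall>c\<in>set C. is_box c" "rotate r w = [Box k, Bul k] @ C @ [Bul (nxt n k)] @ D"
     "rotate r w' = [Bul k] @ C @ [Box (nxt n k), Bul (nxt n k)] @ D"
    using assms(1) unfolding T4_def by blast
  have "rotate r (map (rl f) w) = [Box (f k), Bul (f k)] @ map (rl f) C @ [Bul (nxt n (f k))] @ map (rl f) D"
    using h fp by (simp add: rotate_map)
  moreover have "rotate r (map (rl f) w') = [Bul (f k)] @ map (rl f) C @ [Box (nxt n (f k)), Bul (nxt n (f k))] @ map (rl f) D"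
    using h fp by (simp add: rotate_map)
  moreover have "\<forall>c\<in>set (map (rl f) C). is_box c" using h(1) by auto
  ultimately show ?thesis unfolding T4_def by blast
qed

abbreviation Phi :: "nat \<Rightarrow> letter list \<Rightarrow> letter list" where "Phi n \<equiv> map (rl (tau n))"
abbreviation Phi' :: "nat \<Rightarrow> letter list \<Rightarrow> letter list" where "Phi' n \<equiv> map (rl (tau' n))"

lemma T_iff:
  assumes k: "k < n"
  shows "T1 n k w w' \<longleftrightarrow> T1 n (tau n k) (Phi n w) (Phi n w')"
    and "T2 n k w w' \<longleftrightarrow> T2 n (tau n k) (Phi n w) (Phi n w')"
    and "T3 n k w w' \<longleftrightarrow> T3 n (tau n k) (Phi n w) (Phi n w')"
    and "T4 n k w w' \<longleftrightarrow> T4 n (tau n k) (Phi n w) (Phi n w')"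
proof -
  have tk: "tau n k < n" using tau_lt[OF k] .
  show "T1 n k w w' \<longleftrightarrow> T1 n (tau n k) (Phi n w) (Phi n w')"
  proof
    assume a: "T1 n k w w'"
    show "T1 n (tau n k) (Phi n w) (Phi n w')" by (rule T1_rl[where f="tau n", OF a tau_inj])
  next
    assume a: "T1 n (tau n k) (Phi n w) (Phi n w')"
    have "T1 n (tau' n (tau n k)) (Phi' n (Phi n w)) (Phi' n (Phi n w'))"
      by (rule T1_rl[where f="tau' n", OF a tau'_inj])
    then show "T1 n k w w'" by (simp only: tau'_tau map_rl_inv1)
  qed
  show "T3 n k w w' \<longleftrightarrow> T3 n (tau n k) (Phi n w) (Phi n w')"
  proof
    assume a: "T3 n k w w'"
    show "T3 n (tau n k) (Phi n w) (Phi n w')" by (rule T3_rl[where f="tau n", OF a tau_inj])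
  next
    assume a: "T3 n (tau n k) (Phi n w) (Phi n w')"
    have "T3 n (tau' n (tau n k)) (Phi' n (Phi n w)) (Phi' n (Phi n w'))"
      by (rule T3_rl[where f="tau' n", OF a tau'_inj])
    then show "T3 n k w w'" by (simp only: tau'_tau map_rl_inv1)
  qed
  show "T2 n k w w' \<longleftrightarrow> T2 n (tau n k) (Phi n w) (Phi n w')"
  proof
    assume a: "T2 n k w w'"
    show "T2 n (tau n k) (Phi n w) (Phi n w')" by (rule T2_rl[where f="tau n", OF a tau_prv[OF k]])
  next
    assume a: "T2 n (tau n k) (Phi n w) (Phi n w')"
    have "T2 n (tau' n (tau n k)) (Phi' n (Phi n w)) (Phi' n (Phi n w'))"
      by (rule T2_rl[where f="tau' n", OF a tau'_prv[OF tk]])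
    then show "T2 n k w w'" by (simp only: tau'_tau map_rl_inv1)
  qed
  show "T4 n k w w' \<longleftrightarrow> T4 n (tau n k) (Phi n w) (Phi n w')"
  proof
    assume a: "T4 n k w w'"
    show "T4 n (tau n k) (Phi n w) (Phi n w')" by (rule T4_rl[where f="tau n", OF a tau_nxt[OF k]])
  next
    assume a: "T4 n (tau n k) (Phi n w) (Phi n w')"
    have "T4 n (tau' n (tau n k)) (Phi' n (Phi n w)) (Phi' n (Phi n w'))"
      by (rule T4_rl[where f="tau' n", OF a tau'_nxt[OF tk]])
    then show "T4 n k w w'" by (simp only: tau'_tau map_rl_inv1)
  qed
qed

lemma bls_map_rl: "bls (map (rl f) w) = map f (bls w)"
proof (induct w)
  case (Cons a w) then show ?case by (cases a) auto
qed simp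

lemma rl_comp1[simp]: "rl (tau' n) \<circ> rl (tau n) = id" by (rule ext) (simp add: rl_inv1)
lemma rl_comp2[simp]: "rl (tau n) \<circ> rl (tau' n) = id" by (rule ext) (simp add: rl_inv2)

lemma map_tau_range: "0 < n \<Longrightarrow> map (tau n) [0..<n] = rotate 1 [0..<n]"
proof (rule nth_equalityI)
  fix i assume n: "0 < n" and "i < length (map (tau n) [0..<n])"
  then have i: "i < n" by simp
  have "rotate 1 [0..<n] ! i = [0..<n] ! ((i + 1) mod n)" using nth_rotate[of i "[0..<n]" 1] i by simp
  also have "\<dots> = (i + 1) mod n" using n by simp
  finally show "map (tau n) [0..<n] ! i = rotate 1 [0..<n] ! i" using i unfolding tau_def nxt_def by simp
qed simp

lemma map_tau'_range: "0 < n \<Longrightarrow> map (tau' n) [0..<n] = rotate (n - 1) [0..<n]"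
proof (rule nth_equalityI)
  fix i assume n: "0 < n" and "i < length (map (tau' n) [0..<n])"
  then have i: "i < n" by simp
  have e: "n - 1 + i = i + n - 1" using n by simp
  have il: "i < length [0..<n]" using i by simp
  have "rotate (n - 1) [0..<n] ! i = [0..<n] ! ((n - 1 + i) mod length [0..<n])" by (rule nth_rotate[OF il])
  also have "length [0..<n] = n" by simp
  finally have "rotate (n - 1) [0..<n] ! i = [0..<n] ! ((n - 1 + i) mod n)" .
  also have "\<dots> = (n - 1 + i) mod n" using n by simp
  also have "\<dots> = (i + n - 1) mod n" by (simp only: e)
  finally have rhs: "rotate (n - 1) [0..<n] ! i = (i + n - 1) mod n" .
  have lhs: "map (tau' n) [0..<n] ! i = prv n i" using i unfolding tau'_def by simp
  show "map (tau' n) [0..<n] ! i = rotate (n - 1) [0..<n] ! i" unfolding lhs rhs prv_def ..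
qed simp

lemma Omega_map_rl:
  assumes w: "w \<in> Omega L n" and f: "\<And>k. k < n \<Longrightarrow> f k < n" and r: "map f [0..<n] = rotate s [0..<n]"
  shows "map (rl f) w \<in> Omega L n"
proof -
  obtain r where br: "bls w = rotate r [0..<n]" using Omega_D(3)[OF w] by blast
  have "bls (map (rl f) w) = map f (rotate r [0..<n])" using br by (simp add: bls_map_rl)
  also have "\<dots> = rotate r (map f [0..<n])" by (rule rotate_map[symmetric])
  also have "\<dots> = rotate (r + s) [0..<n]" using r by (simp add: rotate_rotate)
  finally have "bls (map (rl f) w) = rotate (r + s) [0..<n]" .
  moreover have "Box i \<in> set (map (rl f) w) \<Longrightarrow> i < n" for i
  proof -
    assume "Box i \<in> set (map (rl f) w)"
    then obtain x where x: "x \<in> set w" "rl f x = Box i" by auto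
    obtain j where "x = Box j" "i = f j" using x(2) by (cases x) auto
    then show "i < n" using x Omega_D(2)[OF w] f by blast
  qed
  ultimately show ?thesis using Omega_D(1)[OF w] by (intro Omega_intro) auto
qed

lemma Omega_Phi: "0 < n \<Longrightarrow> w \<in> Omega L n \<Longrightarrow> Phi n w \<in> Omega L n"
  using Omega_map_rl[OF _ tau_lt map_tau_range] by blast

lemma Omega_Phi': "0 < n \<Longrightarrow> w \<in> Omega L n \<Longrightarrow> Phi' n w \<in> Omega L n"
  using Omega_map_rl[OF _ tau'_lt map_tau'_range] by blast

lemma Omega_Phi_iff: "0 < n \<Longrightarrow> Phi n w \<in> Omega L n \<longleftrightarrow> w \<in> Omega L n"
  using Omega_Phi Omega_Phi'[of n "Phi n w"] by auto

lemma bij_Phi: "0 < n \<Longrightarrow> bij_betw (Phi n) (Omega L n) (Omega L n)"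
  by (rule bij_betw_byWitness[where f'="Phi' n"]) (auto simp: Omega_Phi Omega_Phi')

lemma bij_tau: "bij_betw (tau n) {..<n} {..<n}"
  by (rule bij_betw_byWitness[where f'="tau' n"]) (auto simp: tau'_tau tau_tau' tau_lt tau'_lt)

lemma tau_eq: "k < n \<Longrightarrow> tau n k = (k + 1) mod n" unfolding tau_def nxt_def by simp

lemma rate_sym:
  assumes n: "0 < n"
  shows "rate n (\<lambda>j. p ((j + 1) mod n)) (\<lambda>j. q ((j + 1) mod n)) w w' = rate n p q (Phi n w) (Phi n w')"
proof -
  define h where "h j = (if T1 n j (Phi n w) (Phi n w') then p j else 0) + (if T2 n j (Phi n w) (Phi n w') then p j else 0)
    + (if T3 n j (Phi n w) (Phi n w') then q j else 0) + (if T4 n j (Phi n w) (Phi n w') then q j else 0)" for j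
  have "rate n (\<lambda>j. p ((j + 1) mod n)) (\<lambda>j. q ((j + 1) mod n)) w w' = (\<Sum>k<n. h (tau n k))"
    unfolding rate_def
  proof (rule sum.cong[OF refl])
    fix k assume "k \<in> {..<n}"
    then have k: "k < n" by simp
    show "(if T1 n k w w' then p ((k + 1) mod n) else 0) + (if T2 n k w w' then p ((k + 1) mod n) else 0) +
          (if T3 n k w w' then q ((k + 1) mod n) else 0) + (if T4 n k w w' then q ((k + 1) mod n) else 0) = h (tau n k)"
      unfolding h_def T_iff[OF k] tau_eq[OF k] ..
  qed
  also have "\<dots> = (\<Sum>j<n. h j)" by (rule sum.reindex_bij_betw[OF bij_tau])
  finally show ?thesis unfolding rate_def h_def .
qed

lemma stat_transfer:
  assumes n: "0 < n" and st: "stationary L n p q \<pi>"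
  shows "stationary L n (\<lambda>j. p ((j + 1) mod n)) (\<lambda>j. q ((j + 1) mod n)) (\<lambda>w. \<pi> (Phi n w))"
proof -
  let ?S = "Omega L n"
  let ?p = "\<lambda>j. p ((j + 1) mod n)"
  let ?q = "\<lambda>j. q ((j + 1) mod n)"
  have b: "bij_betw (Phi n) ?S ?S" by (rule bij_Phi[OF n])
  have re: "(\<Sum>w\<in>?S. g (Phi n w)) = (\<Sum>u\<in>?S. g u)" for g :: "letter list \<Rightarrow> real"
    by (rule sum.reindex_bij_betw[OF b])
  have s1: "\<forall>w. w \<notin> ?S \<longrightarrow> \<pi> (Phi n w) = 0" using st Omega_Phi_iff[OF n] unfolding stationary_def by blast
  have s2: "\<forall>w\<in>?S. 0 \<le> \<pi> (Phi n w)" using st Omega_Phi[OF n] unfolding stationary_def by blast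
  have s3: "(\<Sum>w\<in>?S. \<pi> (Phi n w)) = 1" using st re[of \<pi>] unfolding stationary_def by simp
  have s4: "(\<Sum>w'\<in>?S. \<pi> (Phi n w') * rate n ?p ?q w' w) = \<pi> (Phi n w) * (\<Sum>w'\<in>?S. rate n ?p ?q w w')"
    if w: "w \<in> ?S" for w
  proof -
    have "(\<Sum>w'\<in>?S. \<pi> (Phi n w') * rate n ?p ?q w' w) = (\<Sum>w'\<in>?S. \<pi> (Phi n w') * rate n p q (Phi n w') (Phi n w))"
      by (simp only: rate_sym[OF n])
    also have "\<dots> = (\<Sum>u\<in>?S. \<pi> u * rate n p q u (Phi n w))" by (rule re)
    also have "\<dots> = \<pi> (Phi n w) * (\<Sum>u\<in>?S. rate n p q (Phi n w) u)"
      using st Omega_Phi[OF n w] unfolding stationary_def by blast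
    also have "(\<Sum>u\<in>?S. rate n p q (Phi n w) u) = (\<Sum>w'\<in>?S. rate n p q (Phi n w) (Phi n w'))"
      by (rule re[symmetric])
    also have "\<dots> = (\<Sum>w'\<in>?S. rate n ?p ?q w w')" by (simp only: rate_sym[OF n])
    finally show ?thesis .
  qed
  show ?thesis unfolding stationary_def using s1 s2 s3 s4 by blast
qed

theorem proposition6p2:
  fixes L n i :: nat and p q :: "nat \<Rightarrow> real"
  assumes "1 \<le> n" and "n < L"
    and "\<forall>k<n. 0 < p k" and "\<forall>k<n. 0 < q k"
    and "i < n"
  shows "box_density L n (\<lambda>j. p ((j + 1) mod n)) (\<lambda>j. q ((j + 1) mod n)) i
         = box_density L n p q ((i + 1) mod n)"
proof (cases "n = 1")
  case True
  have r: "rate n (\<lambda>j. p ((j + 1) mod n)) (\<lambda>j. q ((j + 1) mod n)) = rate n p q"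
    using True by (intro ext) (simp add: rate_def)
  have i0: "(i + 1) mod n = i" using True assms(5) by simp
  show ?thesis unfolding box_density_def stat_dist_def stationary_def r i0 ..
next
  case False
  then have n2: "2 \<le> n" using assms(1) by simp
  have n0: "0 < n" using assms(1) by simp
  let ?p = "\<lambda>j. p ((j + 1) mod n)"
  let ?q = "\<lambda>j. q ((j + 1) mod n)"
  let ?S = "Omega L n"
  let ?\<pi> = "stat_dist L n p q"
  have p': "\<forall>k<n. 0 < ?p k" using assms(3) n0 by simp
  have q': "\<forall>k<n. 0 < ?q k" using assms(4) n0 by simp
  have st: "stationary L n p q ?\<pi>" by (rule stat_dist_char(1)[OF n2 assms(2-4)])
  have sd: "stat_dist L n ?p ?q = (\<lambda>w. ?\<pi> (Phi n w))"
    by (rule stat_dist_char(2)[OF n2 assms(2) p' q' stat_transfer[OF n0 st]])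
  let ?A = "{w \<in> ?S. w ! 0 = Box i}"
  let ?B = "{u \<in> ?S. u ! 0 = Box ((i + 1) mod n)}"
  have ti: "tau n i = (i + 1) mod n" by (rule tau_eq[OF assms(5)])
  have Lpos: "0 < L" using assms(2) by simp
  have inj: "inj_on (Phi n) ?A"
    by (rule inj_on_inverseI[where g="Phi' n"]) (simp add: map_rl_inv1)
  have img: "Phi n ` ?A = ?B"
  proof
    show "Phi n ` ?A \<subseteq> ?B"
    proof
      fix u assume "u \<in> Phi n ` ?A"
      then obtain w where w: "w \<in> ?S" "w ! 0 = Box i" "u = Phi n w" by blast
      have "length w = L" using Omega_D(1)[OF w(1)] .
      then have "u ! 0 = Box ((i + 1) mod n)" using w Lpos ti by simp
      moreover have "u \<in> ?S" using Omega_Phi[OF n0 w(1)] w(3) by simp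
      ultimately show "u \<in> ?B" by simp
    qed
  next
    show "?B \<subseteq> Phi n ` ?A"
    proof
      fix u assume u: "u \<in> ?B"
      let ?w = "Phi' n u"
      have wS: "?w \<in> ?S" using Omega_Phi'[OF n0] u by simp
      have uS: "u \<in> ?S" using u by simp
      have "length u = L" using Omega_D(1)[OF uS] .
      then have "?w ! 0 = Box (tau' n (tau n i))" using u Lpos ti by simp
      then have "?w ! 0 = Box i" by (simp add: tau'_tau)
      moreover have "Phi n ?w = u" by (simp add: map_rl_inv2)
      ultimately show "u \<in> Phi n ` ?A" using wS by (metis (mono_tags, lifting) image_eqI mem_Collect_eq)
    qed
  qed
  have "box_density L n ?p ?q i = (\<Sum>w\<in>?A. ?\<pi> (Phi n w))"
    unfolding box_density_def sd ..
  also have "\<dots> = (\<Sum>u\<in>Phi n ` ?A. ?\<pi> u)" by (rule sum.reindex[OF inj, symmetric, unfolded comp_def])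
  also have "\<dots> = (\<Sum>u\<in>?B. ?\<pi> u)" unfolding img ..
  also have "\<dots> = box_density L n p q ((i + 1) mod n)" unfolding box_density_def ..
  finally show ?thesis .
qed

end
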